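(* Let $X$ be a countable set and $\mathcal{A},\mathcal{B}\subseteq\mathcal{P}_\infty(X)$ be $C$-measurable M-families. Then $\mathcal{A}\cap\mathcal{B}$ is an M-family.
   Context: $\mathcal{P}_\infty(X)$: infinite subsets of $X$ with the topology of $2^X$. $C$-measurable: in the smallest $\sigma$-algebra containing the open sets and closed under the Souslin operation. An M-family is a hereditary (closed under infinite subsets) family $\mathcal{A}$ such that for every sequence $(A_n)_n$ in $\mathcal{A}$ there is $A\in\mathcal{A}$ with $A\setminus\bigcup_{i\ge n}A_i$ finite for every $n$. *)

theory Defs
  imports "HOL-Analysis.Analysis"
begin

definition Pinf :: "'a set \<Rightarrow> 'a set set" where
  "Pinf X = {A. A \<subseteq> X \<and> infinite A}"

text \<open>Basic open sets of the Cantor space \<open>2^X\<close> (identified with \<open>Pow X\<close>):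
  sets containing the finite set \<open>F\<close> and disjoint from the finite set \<open>G\<close>.\<close>
definition cyl :: "'a set \<Rightarrow> 'a set \<Rightarrow> 'a set \<Rightarrow> 'a set set" where
  "cyl X F G = {A. A \<subseteq> X \<and> F \<subseteq> A \<and> A \<inter> G = {}}"

text \<open>Open subsets of \<open>2^X\<close> in the product topology.\<close>
definition cantor_open :: "'a set \<Rightarrow> 'a set set \<Rightarrow> bool" where
  "cantor_open X U \<longleftrightarrow> U \<subseteq> Pow X \<and>
     (\<forall>A\<in>U. \<exists>F G. finite F \<and> finite G \<and> F \<subseteq> X \<and> G \<subseteq> X \<and> A \<in> cyl X F G \<and> cyl X F G \<subseteq> U)"

definition souslin :: "(nat list \<Rightarrow> 'b set) \<Rightarrow> 'b set" where
  "souslin S = (\<Union>\<sigma>::nat \<Rightarrow> nat. \<Inter>n. S (map \<sigma> [0..<Suc n]))"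

text \<open>C-measurable subsets of \<open>P_\<infinity>(X)\<close>: the smallest \<sigma>-algebra on \<open>P_\<infinity>(X)\<close>
  containing the (relatively) open sets and closed under the Souslin operation.\<close>
inductive_set Cmeas :: "'a set \<Rightarrow> 'a set set set" for X :: "'a set" where
  open_in: "cantor_open X U \<Longrightarrow> U \<inter> Pinf X \<in> Cmeas X"
| compl: "A \<in> Cmeas X \<Longrightarrow> Pinf X - A \<in> Cmeas X"
| cunion: "(\<And>n::nat. A n \<in> Cmeas X) \<Longrightarrow> (\<Union>n. A n) \<in> Cmeas X"
| souslin: "(\<And>s. S s \<in> Cmeas X) \<Longrightarrow> souslin S \<in> Cmeas X"

definition M_family :: "'a set \<Rightarrow> 'a set set \<Rightarrow> bool" where
  "M_family X \<A> \<longleftrightarrow> \<A> \<subseteq> Pinf X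
     \<and> (\<forall>A\<in>\<A>. \<forall>B. B \<subseteq> A \<and> infinite B \<longrightarrow> B \<in> \<A>)
     \<and> (\<forall>As::nat \<Rightarrow> 'a set. (\<forall>n. As n \<in> \<A>) \<longrightarrow>
          (\<exists>A\<in>\<A>. \<forall>n. finite (A - (\<Union>i\<in>{n..}. As i))))"

end

theory Submission
  imports Defs
begin


definition Ell :: "nat set \<Rightarrow> nat set \<Rightarrow> nat set set" where
  "Ell s A = {Y. infinite Y \<and> s \<subseteq> Y \<and> Y \<subseteq> s \<union> A}"

definition tl_of :: "nat set \<Rightarrow> nat set \<Rightarrow> nat set" where
  "tl_of B t = {x\<in>B. \<forall>y\<in>t. y < x}"

lemma Ell_mono: "C' \<subseteq> C \<Longrightarrow> Ell u C' \<subseteq> Ell u C"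
  unfolding Ell_def by auto

lemma Ell_inf: "Y \<in> Ell u C \<Longrightarrow> infinite Y"
  unfolding Ell_def by auto

lemma Ell_ne: "infinite C \<Longrightarrow> s \<union> C \<in> Ell s C"
  unfolding Ell_def by auto

lemma tl_of_inf: assumes "infinite B" "finite t" shows "infinite (tl_of B t)"
proof -
  have "B \<subseteq> tl_of B t \<union> {..Max (insert 0 t)}"
    using assms(2) by (auto simp: tl_of_def) (meson Max_ge finite_insert insertCI le_trans not_le)
  then show ?thesis using assms(1) finite_subset by blast
qed

lemma multi_shrink:
  assumes mono: "\<And>t C C'. P t C \<Longrightarrow> C' \<subseteq> C \<Longrightarrow> infinite C' \<Longrightarrow> P t C'"
    and ex: "\<And>t C. finite t \<Longrightarrow> infinite C \<Longrightarrow> \<exists>C'\<subseteq>C. infinite C' \<and> P t C'"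
    and T: "finite T" "\<forall>t\<in>T. finite t"
  shows "infinite C \<Longrightarrow> \<exists>C'\<subseteq>C. infinite C' \<and> (\<forall>t\<in>T. P t C')"
  using T
proof (induction T arbitrary: C rule: finite_induct)
  case empty then show ?case by blast
next
  case (insert t T)
  obtain C1 where "C1 \<subseteq> C" "infinite C1" "\<forall>t\<in>T. P t C1" using insert.IH[of C] insert.prems insert.hyps by blast
  obtain C2 where "C2 \<subseteq> C1" "infinite C2" "P t C2" using ex[of t C1] \<open>infinite C1\<close> insert.prems by auto
  then show ?case using mono \<open>\<forall>t\<in>T. P t C1\<close> \<open>C1 \<subseteq> C\<close> by (metis insert_iff subset_trans)
qed

lemma fusion:
  assumes mono: "\<And>t C C'. P t C \<Longrightarrow> C' \<subseteq> C \<Longrightarrow> infinite C' \<Longrightarrow> P t C'"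
    and ex: "\<And>t C. finite t \<Longrightarrow> infinite C \<Longrightarrow> \<exists>C'\<subseteq>C. infinite C' \<and> P t C'"
    and A: "infinite A"
  shows "\<exists>B\<subseteq>A. infinite B \<and> (\<forall>t. finite t \<and> t \<subseteq> B \<longrightarrow> P t (tl_of B t))"
proof -
  have ms: "\<And>bs C. finite bs \<Longrightarrow> infinite C \<Longrightarrow> \<exists>C'\<subseteq>C. infinite C' \<and> (\<forall>t\<subseteq>bs. P t C')"
  proof -
    fix bs :: "nat set" and C :: "nat set" assume "finite bs" "infinite C"
    have f1: "finite (Pow bs)" using \<open>finite bs\<close> by simp
    have f2: "\<forall>t\<in>Pow bs. finite t" using \<open>finite bs\<close> by (metis PowD rev_finite_subset)
    have "\<exists>C'\<subseteq>C. infinite C' \<and> (\<forall>t\<in>Pow bs. P t C')"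
      by (rule multi_shrink[OF mono ex f1 f2 \<open>infinite C\<close>])
    then show "\<exists>C'\<subseteq>C. infinite C' \<and> (\<forall>t\<subseteq>bs. P t C')" by (simp add: Pow_def)
  qed
  define nxt where "nxt = (\<lambda>bs C. SOME C'. C' \<subseteq> C \<and> infinite C' \<and> (\<forall>t\<subseteq>bs. P t C'))"
  have nxt: "finite bs \<Longrightarrow> infinite C \<Longrightarrow> nxt bs C \<subseteq> C \<and> infinite (nxt bs C) \<and> (\<forall>t\<subseteq>bs. P t (nxt bs C))" for bs C
  proof -
    assume "finite bs" "infinite C"
    then have "\<exists>C'. C' \<subseteq> C \<and> infinite C' \<and> (\<forall>t\<subseteq>bs. P t C')" using ms[OF \<open>finite bs\<close> \<open>infinite C\<close>] by simp
    from someI_ex[OF this] show ?thesis unfolding nxt_def .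
  qed
  define st where "st = rec_nat ({}, nxt {} A)
     (\<lambda>n (bs, C). (insert (LEAST x. x \<in> C) bs, nxt (insert (LEAST x. x \<in> C) bs) (C - {LEAST x. x \<in> C})))"
  define D where "D n = snd (st n)" for n
  define bs where "bs n = fst (st n)" for n
  define b where "b n = (LEAST x. x \<in> D n)" for n
  have st0: "bs 0 = {}" "D 0 = nxt {} A" unfolding bs_def D_def st_def by auto
  have stS: "bs (Suc n) = insert (b n) (bs n)" "D (Suc n) = nxt (bs (Suc n)) (D n - {b n})" for n
  proof -
    have e: "st (Suc n) = (insert (LEAST x. x \<in> snd (st n)) (fst (st n)),
       nxt (insert (LEAST x. x \<in> snd (st n)) (fst (st n))) (snd (st n) - {LEAST x. x \<in> snd (st n)}))"
      unfolding st_def by (simp add: case_prod_beta)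
    show "bs (Suc n) = insert (b n) (bs n)" unfolding bs_def b_def D_def by (simp only: e fst_conv snd_conv)
    show "D (Suc n) = nxt (bs (Suc n)) (D n - {b n})" unfolding bs_def b_def D_def by (simp only: e fst_conv snd_conv)
  qed
  have inv: "finite (bs n) \<and> infinite (D n) \<and> (\<forall>t\<subseteq>bs n. P t (D n))" for n
  proof (induction n)
    case 0 then show ?case using nxt[of "{}" A] A st0 by auto
  next
    case (Suc n)
    then have "infinite (D n - {b n})" by auto
    then show ?case using nxt[of "bs (Suc n)" "D n - {b n}"] Suc stS by auto
  qed
  have Dsub: "D (Suc n) \<subseteq> D n - {b n}" for n
    using nxt[of "bs (Suc n)" "D n - {b n}"] inv[of n] inv[of "Suc n"] stS by auto
  have Ddec: "n \<le> m \<Longrightarrow> D m \<subseteq> D n" for n m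
    by (induction m rule: dec_induct) (use Dsub in blast)+
  have bD: "b n \<in> D n" for n
  proof -
    have "D n \<noteq> {}" using inv[of n] by auto
    then obtain x where "x \<in> D n" by blast
    then show ?thesis unfolding b_def by (rule LeastI)
  qed
  have bmin: "x \<in> D n \<Longrightarrow> b n \<le> x" for x n
    unfolding b_def by (rule Least_le)
  have b_lt: "n < m \<Longrightarrow> b n < b m" for n m
  proof -
    assume "n < m"
    then have "b m \<in> D (Suc n)" using bD[of m] Ddec[of "Suc n" m] by auto
    then have "b m \<in> D n - {b n}" using Dsub by blast
    then show "b n < b m" using bmin[of "b m" n] by auto
  qed
  have sm: "strict_mono b" using b_lt by (simp add: strict_monoI)
  have bs_eq: "bs n = b ` {..<n}" for n
    by (induction n) (auto simp: st0 stS lessThan_Suc)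
  define B where "B = range b"
  have BA: "B \<subseteq> A"
    using bD Ddec[of 0] nxt[of "{}" A] A st0 unfolding B_def by fastforce
  have Binf: "infinite B" unfolding B_def using sm strict_mono_imp_inj_on range_inj_infinite by blast
  have "P t (tl_of B t)" if tf: "finite t" and tB: "t \<subseteq> B" for t
  proof -
    define I where "I = b -` t"
    have inj: "inj b" using sm strict_mono_imp_inj_on by blast
    have tI: "t = b ` I" unfolding I_def using tB B_def by auto
    have fI: "finite I" unfolding I_def using tf inj by (simp add: finite_vimageI)
    define n where "n = (if I = {} then 0 else Suc (Max I))"
    have "t \<subseteq> bs n" unfolding bs_eq n_def tI using fI by (auto simp: less_Suc_eq_le)
    then have Pn: "P t (D n)" using inv by blast
    have "tl_of B t \<subseteq> D n"
    proof
      fix x assume "x \<in> tl_of B t"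
      then obtain m where xm: "x = b m" and lt: "\<forall>y\<in>t. y < b m" unfolding tl_of_def B_def by auto
      have "n \<le> m"
      proof (cases "I = {}")
        case True then show ?thesis by (simp add: n_def)
      next
        case False
        then have "b (Max I) \<in> t" using fI tI by auto
        then have "b (Max I) < b m" using lt by blast
        then have "Max I < m" using sm by (metis strict_mono_less)
        then show ?thesis using False by (simp add: n_def)
      qed
      then show "x \<in> D n" using xm bD Ddec by blast
    qed
    then show ?thesis using mono[OF Pn] tl_of_inf[OF Binf tf] by blast
  qed
  then show ?thesis using BA Binf by blast
qed


definition CR :: "nat set set \<Rightarrow> bool" where
  "CR P \<longleftrightarrow> (\<forall>s A. finite s \<longrightarrow> infinite A \<longrightarrow> (\<exists>B\<subseteq>A. infinite B \<and> (Ell s B \<subseteq> P \<or> Ell s B \<inter> P = {})))"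

definition RN :: "nat set set \<Rightarrow> bool" where
  "RN P \<longleftrightarrow> (\<forall>s A. finite s \<longrightarrow> infinite A \<longrightarrow> (\<exists>B\<subseteq>A. infinite B \<and> Ell s B \<inter> P = {}))"

definition Eopen :: "nat set set \<Rightarrow> bool" where
  "Eopen P \<longleftrightarrow> (\<forall>Y\<in>P. \<exists>s A. finite s \<and> Y \<in> Ell s A \<and> Ell s A \<subseteq> P)"

lemma tl_of_empty[simp]: "tl_of B {} = B" by (simp add: tl_of_def)

lemma eopen_CR: assumes op: "Eopen P" shows "CR P"
  unfolding CR_def
proof (intro allI impI)
  fix s A :: "nat set" assume s: "finite s" and A: "infinite A"
  define acc where "acc u C \<longleftrightarrow> Ell u C \<subseteq> P" for u C
  define rej where "rej u C \<longleftrightarrow> (\<forall>C'\<subseteq>C. infinite C' \<longrightarrow> \<not> acc u C')" for u C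
  have acc_mono: "acc u C \<Longrightarrow> C' \<subseteq> C \<Longrightarrow> acc u C'" for u C C'
    unfolding acc_def using Ell_mono by blast
  have rej_mono: "rej u C \<Longrightarrow> C' \<subseteq> C \<Longrightarrow> rej u C'" for u C C'
    unfolding rej_def by blast
  have m1: "(acc (s\<union>t) C \<or> rej (s\<union>t) C) \<Longrightarrow> C' \<subseteq> C \<Longrightarrow> infinite C' \<Longrightarrow> (acc (s\<union>t) C' \<or> rej (s\<union>t) C')" for t C C'
    using acc_mono rej_mono by blast
  have e1: "finite t \<Longrightarrow> infinite C \<Longrightarrow> \<exists>C'\<subseteq>C. infinite C' \<and> (acc (s\<union>t) C' \<or> rej (s\<union>t) C')" for t C
  proof (cases "rej (s\<union>t) C")
    case True then show ?thesis if "infinite C" using that by blast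
  next
    case False
    then obtain C' where "C'\<subseteq>C" "infinite C'" "acc (s\<union>t) C'" unfolding rej_def by blast
    then show ?thesis by blast
  qed
  have "\<exists>B\<subseteq>A. infinite B \<and> (\<forall>t. finite t \<and> t \<subseteq> B \<longrightarrow> acc (s\<union>t) (tl_of B t) \<or> rej (s\<union>t) (tl_of B t))"
    by (rule fusion[where P="\<lambda>t C. acc (s\<union>t) C \<or> rej (s\<union>t) C", OF m1 e1 A])
  then obtain B where BA: "B \<subseteq> A" and Bi: "infinite B"
    and dec: "\<forall>t. finite t \<and> t \<subseteq> B \<longrightarrow> acc (s\<union>t) (tl_of B t) \<or> rej (s\<union>t) (tl_of B t)"
    by auto
  have dec0: "acc s B \<or> rej s B" using dec[rule_format, of "{}"] by simp
  show "\<exists>B'\<subseteq>A. infinite B' \<and> (Ell s B' \<subseteq> P \<or> Ell s B' \<inter> P = {})"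
  proof (cases "acc s B")
    case True then show ?thesis using BA Bi unfolding acc_def by blast
  next
    case False
    then have rB: "rej s B" using dec0 by blast
    define P2 where "P2 t C \<longleftrightarrow> ((t \<subseteq> B \<and> rej (s\<union>t) (tl_of B t)) \<longrightarrow>
        (\<forall>n\<in>C\<inter>B. (\<forall>y\<in>t. y<n) \<longrightarrow> rej (s \<union> insert n t) (tl_of B (insert n t))))" for t C
    have mono2: "P2 t C \<Longrightarrow> C' \<subseteq> C \<Longrightarrow> infinite C' \<Longrightarrow> P2 t C'" for t C C'
      unfolding P2_def by blast
    have ex2: "finite t \<Longrightarrow> infinite C \<Longrightarrow> \<exists>C'\<subseteq>C. infinite C' \<and> P2 t C'" for t C
    proof -
      assume tf: "finite t" and Ci: "infinite C"
      show "\<exists>C'\<subseteq>C. infinite C' \<and> P2 t C'"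
      proof (cases "t \<subseteq> B \<and> rej (s\<union>t) (tl_of B t)")
        case False then show ?thesis using Ci unfolding P2_def by blast
      next
        case True
        define Bad where "Bad = {n \<in> tl_of B t. acc (s \<union> insert n t) (tl_of B (insert n t))}"
        have "finite Bad"
        proof (rule ccontr)
          assume inf: "\<not> finite Bad"
          have "acc (s\<union>t) Bad"
            unfolding acc_def
          proof
            fix Y assume "Y \<in> Ell (s\<union>t) Bad"
            then have Yi: "infinite Y" and sY: "s \<union> t \<subseteq> Y" and YB: "Y \<subseteq> s \<union> t \<union> Bad"
              by (auto simp: Ell_def)
            have "Y - (s\<union>t) \<noteq> {}" using Yi s tf
              by (metis Diff_eq_empty_iff finite_UnI finite_subset)
            then obtain y0 where "y0 \<in> Y - (s\<union>t)" by blast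
            define n where "n = (LEAST x. x \<in> Y - (s\<union>t))"
            have nY: "n \<in> Y - (s\<union>t)" unfolding n_def using \<open>y0 \<in> Y - (s\<union>t)\<close> by (rule LeastI)
            have nmin: "y \<in> Y - (s\<union>t) \<Longrightarrow> n \<le> y" for y unfolding n_def by (rule Least_le)
            have nBad: "n \<in> Bad" using nY YB by auto
            then have accn: "acc (s \<union> insert n t) (tl_of B (insert n t))" unfolding Bad_def by blast
            have "Y \<in> Ell (s \<union> insert n t) (tl_of B (insert n t))"
              unfolding Ell_def
            proof (intro CollectI conjI)
              show "infinite Y" by fact
              show "s \<union> insert n t \<subseteq> Y" using sY nY by auto
              show "Y \<subseteq> s \<union> insert n t \<union> tl_of B (insert n t)"
              proof
                fix y assume yY: "y \<in> Y"
                show "y \<in> s \<union> insert n t \<union> tl_of B (insert n t)"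
                proof (cases "y \<in> s \<union> insert n t")
                  case False
                  then have "y \<in> Bad" using yY YB by auto
                  then have "y \<in> B" "\<forall>z\<in>t. z < y" unfolding Bad_def tl_of_def by auto
                  moreover have "n < y" using nmin[of y] yY False by force
                  ultimately show ?thesis unfolding tl_of_def by auto
                qed blast
              qed
            qed
            then show "Y \<in> P" using accn unfolding acc_def by blast
          qed
          moreover have "Bad \<subseteq> tl_of B t" unfolding Bad_def by blast
          ultimately show False using True inf unfolding rej_def by blast
        qed
        have "P2 t (C - Bad)"
          unfolding P2_def
        proof (intro impI ballI)
          fix n assume nC: "n \<in> (C - Bad) \<inter> B" and nt: "\<forall>y\<in>t. y < n"
          have "n \<in> tl_of B t" using nC nt unfolding tl_of_def by blast
          then have na: "\<not> acc (s \<union> insert n t) (tl_of B (insert n t))" using nC unfolding Bad_def by blast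
          have "finite (insert n t) \<and> insert n t \<subseteq> B" using tf True nC by blast
          then show "rej (s \<union> insert n t) (tl_of B (insert n t))" using dec na by blast
        qed
        moreover have "infinite (C - Bad)" using Ci \<open>finite Bad\<close> by simp
        ultimately show ?thesis by blast
      qed
    qed
    have "\<exists>D\<subseteq>B. infinite D \<and> (\<forall>t. finite t \<and> t \<subseteq> D \<longrightarrow> P2 t (tl_of D t))"
      by (rule fusion[where P=P2, OF mono2 ex2 Bi])
    then obtain D where DB: "D \<subseteq> B" and Di: "infinite D"
      and p2: "\<forall>t. finite t \<and> t \<subseteq> D \<longrightarrow> P2 t (tl_of D t)" by auto
    have rejall: "finite t \<Longrightarrow> t \<subseteq> D \<Longrightarrow> rej (s\<union>t) (tl_of B t)" for t
    proof (induction "card t" arbitrary: t)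
      case 0 then show ?case using rB by simp
    next
      case (Suc k)
      then have tne: "t \<noteq> {}" by auto
      define n where "n = Max t"
      define t' where "t' = t - {n}"
      have nt: "n \<in> t" unfolding n_def using Suc.prems tne by simp
      have ck: "k = card t'" unfolding t'_def using Suc.hyps(2) nt Suc.prems by simp
      have t'f: "finite t'" "t' \<subseteq> D" using Suc.prems unfolding t'_def by auto
      have IH: "rej (s\<union>t') (tl_of B t')" using Suc.hyps(1)[OF ck t'f] .
      have "P2 t' (tl_of D t')" using p2 t'f by blast
      moreover have "n \<in> tl_of D t' \<inter> B" "\<forall>y\<in>t'. y < n"
        using nt Suc.prems DB unfolding t'_def n_def tl_of_def
        by (auto simp: order.not_eq_order_implies_strict)
      moreover have "t' \<subseteq> B" using t'f DB by blast
      ultimately have "rej (s \<union> insert n t') (tl_of B (insert n t'))"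
        using IH unfolding P2_def by blast
      moreover have "insert n t' = t" unfolding t'_def using nt by blast
      ultimately show ?case by simp
    qed
    have "Ell s D \<inter> P = {}"
    proof (rule ccontr)
      assume "Ell s D \<inter> P \<noteq> {}"
      then obtain Y where YE: "Y \<in> Ell s D" and YP: "Y \<in> P" by blast
      obtain u E where uf: "finite u" and YuE: "Y \<in> Ell u E" and uEP: "Ell u E \<subseteq> P"
        using op YP unfolding Eopen_def by blast
      define m where "m = Max (insert 0 (u \<union> s))"
      have um: "\<forall>x\<in>u\<union>s. x \<le> m" using uf s unfolding m_def by auto
      define t where "t = {y \<in> Y. y \<le> m} - s"
      have tf: "finite t" unfolding t_def by (rule finite_subset[of _ "{..m}"]) auto
      have tD: "t \<subseteq> D" using YE unfolding Ell_def t_def by auto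
      define C where "C = {y\<in>Y. m < y}"
      have "Y \<subseteq> {..m} \<union> C" unfolding C_def by auto
      then have Ci: "infinite C" using YE unfolding Ell_def
        by (metis (no_types, lifting) finite_Un finite_atMost finite_subset mem_Collect_eq)
      have CB: "C \<subseteq> tl_of B t"
      proof
        fix y assume "y \<in> C"
        then have yY: "y \<in> Y" and my: "m < y" unfolding C_def by auto
        then have "y \<notin> s" using um by force
        then have "y \<in> D" using yY YE unfolding Ell_def by auto
        then show "y \<in> tl_of B t" using DB my unfolding tl_of_def t_def by auto
      qed
      have "acc (s\<union>t) C"
        unfolding acc_def
      proof
        fix Z assume "Z \<in> Ell (s\<union>t) C"
        then have Zi: "infinite Z" and sZ: "s \<union> t \<subseteq> Z" and ZC: "Z \<subseteq> s \<union> t \<union> C"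
          by (auto simp: Ell_def)
        have "u \<subseteq> Z"
        proof
          fix x assume xu: "x \<in> u"
          then have "x \<in> Y" "x \<le> m" using YuE um unfolding Ell_def by auto
          then have "x \<in> s \<union> t" unfolding t_def by auto
          then show "x \<in> Z" using sZ by blast
        qed
        moreover have "Z \<subseteq> Y" using ZC YE unfolding Ell_def t_def C_def by auto
        then have "Z \<subseteq> u \<union> E" using YuE unfolding Ell_def by auto
        ultimately have "Z \<in> Ell u E" using Zi unfolding Ell_def by auto
        then show "Z \<in> P" using uEP by blast
      qed
      then show False using rejall[OF tf tD] CB Ci unfolding rej_def by blast
    qed
    then show ?thesis using DB BA Di by blast
  qed
qed



lemma RN_subset: assumes "RN P" "Q \<subseteq> P" shows "RN Q"
  unfolding RN_def
proof (intro allI impI)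
  fix s A :: "nat set" assume "finite s" "infinite A"
  then obtain B where B: "B \<subseteq> A" "infinite B" "Ell s B \<inter> P = {}"
    using assms(1) unfolding RN_def by blast
  then have "Ell s B \<inter> Q = {}" using assms(2) by blast
  then show "\<exists>B\<subseteq>A. infinite B \<and> Ell s B \<inter> Q = {}" using B by blast
qed

lemma RN_CR: assumes "RN P" shows "CR P"
  unfolding CR_def
proof (intro allI impI)
  fix s A :: "nat set" assume "finite s" "infinite A"
  then obtain B where B: "B \<subseteq> A" "infinite B" "Ell s B \<inter> P = {}"
    using assms unfolding RN_def by blast
  then show "\<exists>B\<subseteq>A. infinite B \<and> (Ell s B \<subseteq> P \<or> Ell s B \<inter> P = {})" by blast
qed

lemma CR_compl: assumes "CR P" shows "CR (- P)"
  unfolding CR_def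
proof (intro allI impI)
  fix s A :: "nat set" assume "finite s" "infinite A"
  then obtain B where B: "B \<subseteq> A" "infinite B" "Ell s B \<subseteq> P \<or> Ell s B \<inter> P = {}"
    using assms unfolding CR_def by blast
  have "Ell s B \<subseteq> - P \<or> Ell s B \<inter> - P = {}" using B(3) by blast
  then show "\<exists>B\<subseteq>A. infinite B \<and> (Ell s B \<subseteq> - P \<or> Ell s B \<inter> - P = {})" using B by blast
qed

lemma CR_UNIV: "CR UNIV"
  unfolding CR_def by (meson subset_UNIV subset_refl)

lemma enum_below:
  fixes S :: "nat set"
  assumes "infinite S"
  shows "{y\<in>S. y < enumerate S n} = enumerate S ` {..<n}"
proof
  show "{y \<in> S. y < enumerate S n} \<subseteq> enumerate S ` {..<n}"
  proof
    fix y assume "y \<in> {y \<in> S. y < enumerate S n}"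
    then have yS: "y \<in> S" and yl: "y < enumerate S n" by auto
    obtain i where "enumerate S i = y" using enumerate_Ex[OF assms yS] by blast
    moreover have "i < n" using yl assms \<open>enumerate S i = y\<close> enumerate_mono_iff by blast
    ultimately show "y \<in> enumerate S ` {..<n}" by blast
  qed
  show "enumerate S ` {..<n} \<subseteq> {y \<in> S. y < enumerate S n}"
  proof
    fix y assume "y \<in> enumerate S ` {..<n}"
    then obtain i where "i < n" "y = enumerate S i" by blast
    then show "y \<in> {y \<in> S. y < enumerate S n}"
      using assms enumerate_in_set[OF assms] enumerate_mono[OF _ assms] by blast
  qed
qed

lemma enum_below_card:
  fixes S :: "nat set"
  assumes "infinite S"
  shows "card {y\<in>S. y < enumerate S n} = n"
  unfolding enum_below[OF assms]
  using card_image[OF inj_on_subset[OF inj_enumerate[OF assms] subset_UNIV], of "{..<n}"] by simp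

lemma RN_UN:
  fixes N :: "nat \<Rightarrow> nat set set"
  assumes N: "\<And>k. RN (N k)"
  shows "RN (\<Union>k. N k)"
  unfolding RN_def
proof (intro allI impI)
  fix s A :: "nat set" assume s: "finite s" and A: "infinite A"
  define P where "P t C \<longleftrightarrow> (\<forall>k\<le>card t. Ell (s\<union>t) C \<inter> N k = {})" for t C
  have mono: "P t C \<Longrightarrow> C' \<subseteq> C \<Longrightarrow> infinite C' \<Longrightarrow> P t C'" for t C C'
    unfolding P_def using Ell_mono[of C' C] by blast
  have exK: "infinite C \<Longrightarrow> \<exists>C'\<subseteq>C. infinite C' \<and> (\<forall>k\<le>K. Ell (s\<union>t) C' \<inter> N k = {})"
    if tf: "finite t" for t C K
  proof (induction K arbitrary: C)
    case 0
    have "finite (s \<union> t)" using s tf by simp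
    then obtain C' where C': "C' \<subseteq> C" "infinite C'" "Ell (s\<union>t) C' \<inter> N 0 = {}"
      using N[of 0] 0 unfolding RN_def by blast
    then show ?case by auto
  next
    case (Suc K)
    then obtain C1 where C1: "C1 \<subseteq> C" "infinite C1" "\<forall>k\<le>K. Ell (s\<union>t) C1 \<inter> N k = {}" by blast
    obtain C2 where C2: "C2 \<subseteq> C1" "infinite C2" "Ell (s\<union>t) C2 \<inter> N (Suc K) = {}"
    proof -
      have "finite (s \<union> t)" using s tf by simp
      then show ?thesis using that N[of "Suc K"] C1(2) unfolding RN_def by blast
    qed
    have "\<forall>k\<le>Suc K. Ell (s\<union>t) C2 \<inter> N k = {}"
    proof (intro allI impI)
      fix k assume "k \<le> Suc K"
      show "Ell (s\<union>t) C2 \<inter> N k = {}"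
      proof (cases "k = Suc K")
        case True then show ?thesis using C2(3) by simp
      next
        case False then have "k \<le> K" using \<open>k \<le> Suc K\<close> by simp
        then show ?thesis using C1(3) Ell_mono[OF C2(1), of "s\<union>t"] by blast
      qed
    qed
    then show ?case using C1 C2 by blast
  qed
  have ex: "finite t \<Longrightarrow> infinite C \<Longrightarrow> \<exists>C'\<subseteq>C. infinite C' \<and> P t C'" for t C
    unfolding P_def by (rule exK)
  have "\<exists>B\<subseteq>A. infinite B \<and> (\<forall>t. finite t \<and> t \<subseteq> B \<longrightarrow> P t (tl_of B t))"
    by (rule fusion[where P=P, OF mono ex A])
  then obtain B where BA: "B \<subseteq> A" and Bi: "infinite B"
    and fu: "\<forall>t. finite t \<and> t \<subseteq> B \<longrightarrow> P t (tl_of B t)" by auto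
  have "Ell s B \<inter> (\<Union>k. N k) = {}"
  proof (rule ccontr)
    assume "Ell s B \<inter> (\<Union>k. N k) \<noteq> {}"
    then obtain Y k where YE: "Y \<in> Ell s B" and Yk: "Y \<in> N k" by blast
    define W where "W = Y - s"
    have Wi: "infinite W" using YE s unfolding W_def Ell_def by auto
    have WB: "W \<subseteq> B" using YE unfolding W_def Ell_def by auto
    define t where "t = {y\<in>W. y < enumerate W k}"
    have ct: "card t = k" unfolding t_def using enum_below_card[OF Wi] .
    have tf: "finite t" unfolding t_def by (rule finite_subset[of _ "{..<enumerate W k}"]) auto
    have tB: "t \<subseteq> B" using WB unfolding t_def by auto
    have "Y \<in> Ell (s\<union>t) (tl_of B t)"
      unfolding Ell_def
    proof (intro CollectI conjI)
      show "infinite Y" using YE Ell_inf by blast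
      show "s \<union> t \<subseteq> Y" using YE unfolding Ell_def t_def W_def by auto
      show "Y \<subseteq> s \<union> t \<union> tl_of B t"
      proof
        fix y assume yY: "y \<in> Y"
        show "y \<in> s \<union> t \<union> tl_of B t"
        proof (cases "y \<in> s \<union> t")
          case False
          then have yW: "y \<in> W" "\<not> y < enumerate W k" using yY unfolding W_def t_def by auto
          then have "\<forall>z\<in>t. z < y" unfolding t_def by auto
          then show ?thesis using yW WB unfolding tl_of_def by auto
        qed blast
      qed
    qed
    moreover have "P t (tl_of B t)" using fu tf tB by blast
    then have "Ell (s\<union>t) (tl_of B t) \<inter> N k = {}" unfolding P_def using ct by auto
    ultimately show False using Yk by blast
  qed
  then show "\<exists>B\<subseteq>A. infinite B \<and> Ell s B \<inter> (\<Union>k. N k) = {}" using BA Bi by blast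
qed

lemma RN_Un: "RN P \<Longrightarrow> RN Q \<Longrightarrow> RN (P \<union> Q)"
proof -
  assume "RN P" "RN Q"
  then have "RN (\<Union>k::nat. if k = 0 then P else Q)" by (intro RN_UN) auto
  moreover have "(\<Union>k::nat. if k = 0 then P else Q) = P \<union> Q"
  proof
    show "(\<Union>k::nat. if k = 0 then P else Q) \<subseteq> P \<union> Q" by auto
    show "P \<union> Q \<subseteq> (\<Union>k::nat. if k = 0 then P else Q)"
    proof
      fix x assume "x \<in> P \<union> Q"
      then show "x \<in> (\<Union>k::nat. if k = 0 then P else Q)"
      proof
        assume "x \<in> P" then show ?thesis by (intro UN_I[of 0]) auto
      next
        assume "x \<in> Q" then show ?thesis by (intro UN_I[of 1]) auto
      qed
    qed
  qed
  ultimately show ?thesis by simp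
qed

lemma Eopen_UN: assumes "\<And>k. Eopen (Ou k)" shows "Eopen (\<Union>k. Ou k)"
  unfolding Eopen_def
proof
  fix Y assume "Y \<in> (\<Union>k. Ou k)"
  then obtain k where "Y \<in> Ou k" by blast
  then obtain s A where "finite s" "Y \<in> Ell s A" "Ell s A \<subseteq> Ou k"
    using assms[of k] unfolding Eopen_def by blast
  then show "\<exists>s A. finite s \<and> Y \<in> Ell s A \<and> Ell s A \<subseteq> (\<Union>k. Ou k)" by blast
qed

lemma CR_char1:
  assumes "CR P" shows "\<exists>Ou. Eopen Ou \<and> RN (P - Ou) \<and> RN (Ou - P)"
proof -
  define Ou where "Ou = {Y. \<exists>s B. finite s \<and> Y \<in> Ell s B \<and> Ell s B \<subseteq> P}"
  have eo: "Eopen Ou" unfolding Eopen_def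
  proof
    fix Y assume "Y \<in> Ou"
    then obtain s B where sB: "finite s" "Y \<in> Ell s B" "Ell s B \<subseteq> P" unfolding Ou_def by blast
    have "Ell s B \<subseteq> Ou" unfolding Ou_def using sB by blast
    then show "\<exists>s A. finite s \<and> Y \<in> Ell s A \<and> Ell s A \<subseteq> Ou" using sB by blast
  qed
  have r1: "RN (P - Ou)"
    unfolding RN_def
  proof (intro allI impI)
    fix s A :: "nat set" assume "finite s" "infinite A"
    then obtain B where "B \<subseteq> A" "infinite B" "Ell s B \<subseteq> P \<or> Ell s B \<inter> P = {}"
      using assms unfolding CR_def by blast
    moreover have "Ell s B \<subseteq> P \<Longrightarrow> Ell s B \<subseteq> Ou" unfolding Ou_def using \<open>finite s\<close> by blast
    ultimately show "\<exists>B\<subseteq>A. infinite B \<and> Ell s B \<inter> (P - Ou) = {}" by blast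
  qed
  have r2: "RN (Ou - P)"
    unfolding RN_def
  proof (intro allI impI)
    fix s A :: "nat set" assume s: "finite s" and A: "infinite A"
    obtain B where B: "B \<subseteq> A" "infinite B" "Ell s B \<subseteq> Ou \<or> Ell s B \<inter> Ou = {}"
      using eopen_CR[OF eo] s A unfolding CR_def by blast
    show "\<exists>B\<subseteq>A. infinite B \<and> Ell s B \<inter> (Ou - P) = {}"
    proof (cases "Ell s B \<inter> Ou = {}")
      case True then show ?thesis using B by blast
    next
      case False
      then have BO: "Ell s B \<subseteq> Ou" using B by blast
      obtain C where C: "C \<subseteq> B" "infinite C" "Ell s C \<subseteq> P \<or> Ell s C \<inter> P = {}"
        using assms s B(2) unfolding CR_def by blast
      have "\<not> (Ell s C \<inter> P = {})"
      proof
        assume dis: "Ell s C \<inter> P = {}"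
        have sc: "s \<union> C \<in> Ell s C" using Ell_ne C(2) by blast
        then have "s \<union> C \<in> Ou" using BO Ell_mono[OF C(1)] by blast
        then have "s \<union> C \<in> P" unfolding Ou_def by blast
        then show False using dis sc by blast
      qed
      then have "Ell s C \<subseteq> P" using C by blast
      then show ?thesis using C B by blast
    qed
  qed
  show ?thesis using eo r1 r2 by blast
qed

lemma CR_char2:
  assumes eo: "Eopen Ou" and r1: "RN (P - Ou)" and r2: "RN (Ou - P)"
  shows "CR P"
  unfolding CR_def
proof (intro allI impI)
  fix s A :: "nat set" assume s: "finite s" and A: "infinite A"
  obtain B where B: "B \<subseteq> A" "infinite B" "Ell s B \<subseteq> Ou \<or> Ell s B \<inter> Ou = {}"
    using eopen_CR[OF eo] s A unfolding CR_def by blast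
  obtain C where C: "C \<subseteq> B" "infinite C" "Ell s C \<inter> ((P - Ou) \<union> (Ou - P)) = {}"
    using RN_Un[OF r1 r2] s B(2) unfolding RN_def by blast
  have "Ell s C \<subseteq> P \<or> Ell s C \<inter> P = {}"
    using B(3) C(3) Ell_mono[OF C(1), of s] by blast
  then show "\<exists>B\<subseteq>A. infinite B \<and> (Ell s B \<subseteq> P \<or> Ell s B \<inter> P = {})"
    using B C by blast
qed

lemma CR_UN:
  fixes P :: "nat \<Rightarrow> nat set set"
  assumes "\<And>k. CR (P k)" shows "CR (\<Union>k. P k)"
proof -
  have "\<forall>k. \<exists>Ou. Eopen Ou \<and> RN (P k - Ou) \<and> RN (Ou - P k)"
  proof
    fix k show "\<exists>Ou. Eopen Ou \<and> RN (P k - Ou) \<and> RN (Ou - P k)" by (rule CR_char1[OF assms])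
  qed
  from choice[OF this] obtain Ou where Ou0: "\<forall>k. Eopen (Ou k) \<and> RN (P k - Ou k) \<and> RN (Ou k - P k)"
    by blast
  have Ou: "\<And>k. Eopen (Ou k)" "\<And>k. RN (P k - Ou k)" "\<And>k. RN (Ou k - P k)" using Ou0 by simp_all
  have a0: "RN (\<Union>k. P k - Ou k)" by (rule RN_UN) (rule Ou(2))
  have b0: "RN (\<Union>k. Ou k - P k)" by (rule RN_UN) (rule Ou(3))
  have a: "RN ((\<Union>k. P k) - (\<Union>k. Ou k))"
    by (rule RN_subset[OF a0]) auto
  have b: "RN ((\<Union>k. Ou k) - (\<Union>k. P k))"
    by (rule RN_subset[OF b0]) auto
  show ?thesis by (rule CR_char2[OF Eopen_UN[OF Ou(1)] a b])
qed

lemma CR_Un: "CR P \<Longrightarrow> CR Q \<Longrightarrow> CR (P \<union> Q)"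
proof -
  assume "CR P" "CR Q"
  then have "CR (\<Union>k::nat. if k = 0 then P else Q)" by (intro CR_UN) auto
  moreover have "(\<Union>k::nat. if k = 0 then P else Q) = P \<union> Q"
  proof
    show "(\<Union>k::nat. if k = 0 then P else Q) \<subseteq> P \<union> Q" by auto
    show "P \<union> Q \<subseteq> (\<Union>k::nat. if k = 0 then P else Q)"
    proof
      fix x assume "x \<in> P \<union> Q"
      then show "x \<in> (\<Union>k::nat. if k = 0 then P else Q)"
      proof
        assume "x \<in> P" then show ?thesis by (intro UN_I[of 0]) auto
      next
        assume "x \<in> Q" then show ?thesis by (intro UN_I[of 1]) auto
      qed
    qed
  qed
  ultimately show ?thesis by simp
qed

lemma CR_Int: "CR P \<Longrightarrow> CR Q \<Longrightarrow> CR (P \<inter> Q)"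
proof -
  assume "CR P" "CR Q"
  then have "CR (- (- P \<union> - Q))" using CR_compl CR_Un by blast
  then show ?thesis by simp
qed

lemma CR_Diff: "CR P \<Longrightarrow> CR Q \<Longrightarrow> CR (P - Q)"
  using CR_Int CR_compl by (simp add: Diff_eq)

lemma CR_INT_fin: "finite I \<Longrightarrow> (\<And>i. i \<in> I \<Longrightarrow> CR (P i)) \<Longrightarrow> CR (\<Inter>i\<in>I. P i)"
  by (induction I rule: finite_induct) (auto simp: CR_UNIV intro: CR_Int)

lemma CR_inf: "CR P \<longleftrightarrow> CR (P \<inter> {Y. infinite Y})"
proof -
  have a: "Ell s B \<subseteq> P \<inter> {Y. infinite Y} \<longleftrightarrow> Ell s B \<subseteq> P" for s B using Ell_inf by blast
  have b: "Ell s B \<inter> (P \<inter> {Y. infinite Y}) = {} \<longleftrightarrow> Ell s B \<inter> P = {}" for s B using Ell_inf by blast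
  show ?thesis unfolding CR_def a b ..
qed



lemma CR_souslin:
  assumes SC: "\<And>l. CR (S l)"
  shows "CR (souslin S)"
proof -
  define Asl where "Asl l = {Y. \<exists>\<sigma>. map \<sigma> [0..<length l] = l \<and> (\<forall>n. Y \<in> S (map \<sigma> [0..<Suc n]))}" for l
  define Hull where "Hull Q = - {Y. \<exists>s B. finite s \<and> Y \<in> Ell s B \<and> Ell s B \<inter> Q = {}}" for Q
  have hull_CR: "CR (Hull Q)" for Q
  proof -
    have "Eopen {Y. \<exists>s B. finite s \<and> Y \<in> Ell s B \<and> Ell s B \<inter> Q = {}}"
      unfolding Eopen_def
    proof
      fix Y assume "Y \<in> {Y. \<exists>s B. finite s \<and> Y \<in> Ell s B \<and> Ell s B \<inter> Q = {}}"
      then obtain s B where sB: "finite s" "Y \<in> Ell s B" "Ell s B \<inter> Q = {}" by blast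
      have "Ell s B \<subseteq> {Y. \<exists>s B. finite s \<and> Y \<in> Ell s B \<and> Ell s B \<inter> Q = {}}"
        using sB by blast
      then show "\<exists>s A. finite s \<and> Y \<in> Ell s A \<and> Ell s A \<subseteq> {Y. \<exists>s B. finite s \<and> Y \<in> Ell s B \<and> Ell s B \<inter> Q = {}}"
        using sB by blast
    qed
    then show ?thesis unfolding Hull_def by (intro CR_compl eopen_CR)
  qed
  have hull_sup: "Q \<subseteq> Hull Q" for Q
    unfolding Hull_def by blast
  have hull_RN: "RN W" if W: "CR W" "W \<subseteq> Hull Q - Q" for W Q
    unfolding RN_def
  proof (intro allI impI)
    fix s A :: "nat set" assume s: "finite s" and A: "infinite A"
    obtain B where B: "B \<subseteq> A" "infinite B" "Ell s B \<subseteq> W \<or> Ell s B \<inter> W = {}"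
      using W(1) s A unfolding CR_def by blast
    have "\<not> Ell s B \<subseteq> W"
    proof
      assume BW: "Ell s B \<subseteq> W"
      then have dis: "Ell s B \<inter> Q = {}" using W(2) by blast
      have sb: "s \<union> B \<in> Ell s B" using Ell_ne B(2) by blast
      then have "s \<union> B \<notin> Hull Q" unfolding Hull_def using s dis by blast
      moreover have "s \<union> B \<in> Hull Q" using sb BW W(2) by blast
      ultimately show False by blast
    qed
    then show "\<exists>B\<subseteq>A. infinite B \<and> Ell s B \<inter> W = {}" using B by blast
  qed
  define Sreg where "Sreg l = (\<Inter>i\<in>{..<length l}. S (take (Suc i) l))" for l
  have Sreg_CR: "CR (Sreg l)" for l
    unfolding Sreg_def by (rule CR_INT_fin) (auto intro: SC)
  define E where "E l = Hull (Asl l) \<inter> Sreg l" for l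
  have E_CR: "CR (E l)" for l unfolding E_def by (intro CR_Int hull_CR Sreg_CR)
  have A_S: "Asl l \<subseteq> Sreg l" for l
  proof
    fix Y assume "Y \<in> Asl l"
    then obtain \<sigma> where sl: "map \<sigma> [0..<length l] = l" and sY: "\<forall>n. Y \<in> S (map \<sigma> [0..<Suc n])"
      unfolding Asl_def by blast
    have "Y \<in> S (take (Suc i) l)" if "i < length l" for i
    proof -
      have "take (Suc i) l = map \<sigma> [0..<Suc i]"
        using that by (subst sl[symmetric]) (simp add: take_map)
      then show ?thesis using sY by simp
    qed
    then show "Y \<in> Sreg l" unfolding Sreg_def by blast
  qed
  have A_E: "Asl l \<subseteq> E l" for l unfolding E_def using hull_sup A_S by blast
  have A_split: "Asl l \<subseteq> (\<Union>k. Asl (l @ [k]))" for l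
  proof
    fix Y assume "Y \<in> Asl l"
    then obtain \<sigma> where sl: "map \<sigma> [0..<length l] = l" and sY: "\<forall>n. Y \<in> S (map \<sigma> [0..<Suc n])"
      unfolding Asl_def by blast
    have "map \<sigma> [0..<length (l @ [\<sigma> (length l)])] = l @ [\<sigma> (length l)]"
      using sl by simp
    then have "Y \<in> Asl (l @ [\<sigma> (length l)])" unfolding Asl_def using sY by blast
    then show "Y \<in> (\<Union>k. Asl (l @ [k]))" by blast
  qed
  define Nl where "Nl l = E l - (\<Union>k. E (l @ [k]))" for l
  have Nl_RN: "RN (Nl l)" for l
  proof (rule hull_RN)
    show "CR (Nl l)" unfolding Nl_def by (intro CR_Diff E_CR CR_UN)
    have "Asl l \<subseteq> (\<Union>k. E (l @ [k]))" using A_split A_E by blast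
    then show "Nl l \<subseteq> Hull (Asl l) - Asl l" unfolding Nl_def E_def by blast
  qed
  have RN_all: "RN (\<Union>l. Nl l)"
  proof -
    have "RN (\<Union>n. Nl (from_nat n))" by (rule RN_UN) (rule Nl_RN)
    moreover have "(\<Union>l. Nl l) \<subseteq> (\<Union>n. Nl (from_nat n))"
    proof
      fix Y assume "Y \<in> (\<Union>l. Nl l)"
      then obtain l where "Y \<in> Nl l" by blast
      then have "Y \<in> Nl (from_nat (to_nat l))" by simp
      then show "Y \<in> (\<Union>n. Nl (from_nat n))" by blast
    qed
    ultimately show ?thesis by (rule RN_subset)
  qed
  have key: "E [] - souslin S \<subseteq> (\<Union>l. Nl l)"
  proof
    fix Y assume YE: "Y \<in> E [] - souslin S"
    show "Y \<in> (\<Union>l. Nl l)"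
    proof (rule ccontr)
      assume nin: "Y \<notin> (\<Union>l. Nl l)"
      have step: "\<exists>k. Y \<in> E (l @ [k])" if "Y \<in> E l" for l
        using that nin unfolding Nl_def by blast
      define L where "L = rec_nat [] (\<lambda>n l. l @ [SOME k. Y \<in> E (l @ [k])])"
      have L0: "L 0 = []" unfolding L_def by simp
      have LS: "L (Suc n) = L n @ [SOME k. Y \<in> E (L n @ [k])]" for n unfolding L_def by simp
      have YL: "Y \<in> E (L n)" for n
      proof (induction n)
        case 0 then show ?case using YE L0 by simp
      next
        case (Suc n)
        show ?case unfolding LS by (rule someI_ex[OF step[OF Suc]])
      qed
      have len: "length (L n) = n" for n by (induction n) (simp_all add: L0 LS)
      have pre: "take n (L m) = L n" if "n \<le> m" for n m
        using that
      proof (induction m rule: dec_induct)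
        case base then show ?case using len by simp
      next
        case (step m) then show ?case using len by (simp add: LS)
      qed
      define \<sigma> where "\<sigma> i = L (Suc i) ! i" for i
      have mapL: "map \<sigma> [0..<n] = L n" for n
      proof (rule nth_equalityI)
        show "length (map \<sigma> [0..<n]) = length (L n)" using len by simp
        fix i assume "i < length (map \<sigma> [0..<n])"
        then have i: "i < n" by simp
        have "L (Suc i) ! i = take (Suc i) (L n) ! i" using pre[of "Suc i" n] i by simp
        also have "\<dots> = L n ! i" by simp
        finally show "map \<sigma> [0..<n] ! i = L n ! i" using i unfolding \<sigma>_def by simp
      qed
      have "Y \<in> S (map \<sigma> [0..<Suc n])" for n
      proof -
        have "Y \<in> Sreg (L (Suc n))" using YL[of "Suc n"] unfolding E_def by blast
        then have "\<forall>x\<in>{..<Suc n}. Y \<in> S (take (Suc x) (L (Suc n)))" unfolding Sreg_def len by simp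
        then have "Y \<in> S (take (Suc n) (L (Suc n)))" by blast
        moreover have "take (Suc n) (L (Suc n)) = L (Suc n)" using len[of "Suc n"] by simp
        ultimately show ?thesis by (simp only: mapL)
      qed
      then have "Y \<in> souslin S" unfolding souslin_def by blast
      then show False using YE by blast
    qed
  qed
  have "souslin S = Asl []" unfolding souslin_def Asl_def by auto
  then have sE: "souslin S \<subseteq> E []" using A_E by blast
  have "CR (E [] - (E [] - souslin S))"
    by (intro CR_Diff E_CR RN_CR RN_subset[OF RN_all key])
  moreover have "E [] - (E [] - souslin S) = souslin S" using sE by blast
  ultimately show ?thesis by simp
qed



lemma CR_preimage:
  fixes Fm :: "nat set \<Rightarrow> 'a set"
  assumes hF: "\<And>Z. infinite Z \<Longrightarrow> Fm Z \<in> Pinf X"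
    and hc: "\<And>U. cantor_open X U \<Longrightarrow> Eopen {Z. infinite Z \<and> Fm Z \<in> U}"
    and Y: "Y \<in> Cmeas X"
  shows "CR {Z. Fm Z \<in> Y}"
  using Y
proof (induction rule: Cmeas.induct)
  case (open_in U)
  have e: "{Z. Fm Z \<in> U \<inter> Pinf X} \<inter> {Y. infinite Y} = {Z. infinite Z \<and> Fm Z \<in> U}"
    using hF by auto
  have "CR {Z. infinite Z \<and> Fm Z \<in> U}" by (rule eopen_CR[OF hc[OF open_in]])
  then show ?case unfolding CR_inf[of "{Z. Fm Z \<in> U \<inter> Pinf X}"] e .
next
  case (compl A)
  have e: "{Z. Fm Z \<in> Pinf X - A} \<inter> {Y. infinite Y} = - {Z. Fm Z \<in> A} \<inter> {Y. infinite Y}"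
    using hF by auto
  have "CR (- {Z. Fm Z \<in> A})" by (rule CR_compl[OF compl.IH])
  then have "CR (- {Z. Fm Z \<in> A} \<inter> {Y. infinite Y})" using CR_inf by blast
  then show ?case unfolding CR_inf[of "{Z. Fm Z \<in> Pinf X - A}"] e .
next
  case (cunion A)
  have e: "{Z. Fm Z \<in> (\<Union>n. A n)} = (\<Union>n. {Z. Fm Z \<in> A n})" by auto
  show ?case unfolding e by (rule CR_UN) (rule cunion.IH)
next
  case (souslin S)
  have e: "{Z. Fm Z \<in> souslin S} = souslin (\<lambda>l. {Z. Fm Z \<in> S l})"
    unfolding souslin_def by auto
  show ?case unfolding e by (rule CR_souslin) (rule souslin.IH)
qed

lemma enum_card_char:
  fixes S :: "nat set"
  assumes S: "infinite S" and x: "x \<in> S" and c: "card {y\<in>S. y < x} = n"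
  shows "enumerate S n = x"
proof -
  obtain j where j: "enumerate S j = x" using enumerate_Ex[OF S x] by blast
  have "card {y\<in>S. y < enumerate S j} = j" by (rule enum_below_card[OF S])
  then have "j = n" using c j by simp
  then show ?thesis using j by simp
qed

lemma enum_agree:
  fixes Y Z :: "nat set"
  assumes Y: "infinite Y" and Z: "infinite Z" and YZ: "Y \<subseteq> Z"
    and sub: "\<And>i. i < n \<Longrightarrow> enumerate Z i \<in> Y" and i: "i < n"
  shows "enumerate Y i = enumerate Z i"
proof -
  have eq: "{y\<in>Y. y < enumerate Z i} = {y\<in>Z. y < enumerate Z i}"
  proof
    show "{y\<in>Y. y < enumerate Z i} \<subseteq> {y\<in>Z. y < enumerate Z i}" using YZ by blast
    show "{y\<in>Z. y < enumerate Z i} \<subseteq> {y\<in>Y. y < enumerate Z i}"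
    proof
      fix y assume "y \<in> {y\<in>Z. y < enumerate Z i}"
      then have yZ: "y \<in> Z" and yl: "y < enumerate Z i" by auto
      obtain i' where i': "enumerate Z i' = y" using enumerate_Ex[OF Z yZ] by blast
      have "i' < i" using yl i' enumerate_mono_iff[OF Z] by metis
      then have "i' < n" using i by simp
      then have "enumerate Z i' \<in> Y" by (rule sub)
      then have "y \<in> Y" using i' by simp
      then show "y \<in> {y\<in>Y. y < enumerate Z i}" using yl by blast
    qed
  qed
  have "card {y\<in>Y. y < enumerate Z i} = i" unfolding eq by (rule enum_below_card[OF Z])
  then show ?thesis using enum_card_char[OF Y sub[OF i]] by blast
qed

lemma enum_strict_mono:
  fixes w :: "nat \<Rightarrow> nat"
  assumes sm: "strict_mono w"
  shows "enumerate (range w) n = w n"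
proof -
  have inj: "inj w" using sm strict_mono_imp_inj_on by blast
  have inf: "infinite (range w)" using inj range_inj_infinite by blast
  have e: "{y\<in>range w. y < w n} = w ` {..<n}"
  proof
    show "{y\<in>range w. y < w n} \<subseteq> w ` {..<n}"
    proof
      fix y assume "y \<in> {y\<in>range w. y < w n}"
      then obtain i where "y = w i" "w i < w n" by blast
      then have "i < n" using sm by (metis strict_mono_less)
      then show "y \<in> w ` {..<n}" using \<open>y = w i\<close> by blast
    qed
    show "w ` {..<n} \<subseteq> {y\<in>range w. y < w n}"
      using sm by (auto simp: strict_mono_less)
  qed
  have "card {y\<in>range w. y < w n} = n"
    unfolding e using card_image[OF inj_on_subset[OF inj subset_UNIV], of "{..<n}"] by simp
  then show ?thesis using enum_card_char[OF inf] by blast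
qed



lemma inj_choice:
  fixes Cs :: "nat \<Rightarrow> 'a set"
  assumes inf: "\<And>n. infinite (Cs n)"
  shows "\<exists>g::nat \<Rightarrow> nat \<Rightarrow> 'a. (\<forall>c r c' r'. g c r = g c' r' \<longrightarrow> c = c' \<and> r = r') \<and> (\<forall>c r. g c r \<in> Cs c)"
proof -
  define f where "f n l = (SOME x. x \<in> Cs (fst (prod_decode n)) \<and> x \<notin> set l)" for n l
  have fex: "f n l \<in> Cs (fst (prod_decode n)) \<and> f n l \<notin> set l" for n l
  proof -
    have "\<exists>x. x \<in> Cs (fst (prod_decode n)) \<and> x \<notin> set l"
    proof (rule ccontr)
      assume "\<not> (\<exists>x. x \<in> Cs (fst (prod_decode n)) \<and> x \<notin> set l)"
      then have "Cs (fst (prod_decode n)) \<subseteq> set l" by blast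
      then show False using inf finite_subset by blast
    qed
    then show ?thesis unfolding f_def by (rule someI_ex)
  qed
  define L where "L = rec_nat [] (\<lambda>n l. l @ [f n l])"
  have L0: "L 0 = []" unfolding L_def by simp
  have LS: "L (Suc n) = L n @ [f n (L n)]" for n unfolding L_def by simp
  have len: "length (L n) = n" for n by (induction n) (simp_all add: L0 LS)
  have props: "distinct (L n) \<and> (\<forall>i<n. L n ! i \<in> Cs (fst (prod_decode i)))" for n
  proof (induction n)
    case 0 then show ?case by (simp add: L0)
  next
    case (Suc n)
    have d: "distinct (L (Suc n))" using Suc fex[of n "L n"] by (simp add: LS)
    have "L (Suc n) ! i \<in> Cs (fst (prod_decode i))" if "i < Suc n" for i
    proof (cases "i < n")
      case True then show ?thesis using Suc len by (simp add: LS nth_append)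
    next
      case False then have "i = n" using that by simp
      then show ?thesis using fex[of n "L n"] len by (simp add: LS nth_append)
    qed
    then show ?case using d by blast
  qed
  have pre: "L m ! i = L n ! i" if "i < n" "n \<le> m" for i n m
    using that(2)
  proof (induction m rule: dec_induct)
    case base then show ?case by simp
  next
    case (step m)
    then show ?case using that(1) len[of m] by (simp add: LS nth_append)
  qed
  define h where "h i = L (Suc i) ! i" for i
  have hC: "h i \<in> Cs (fst (prod_decode i))" for i unfolding h_def using props[of "Suc i"] by simp
  have hinj: "inj h"
  proof (rule injI)
    fix i j assume e: "h i = h j"
    show "i = j"
    proof (rule ccontr)
      assume "i \<noteq> j"
      then have "i < j \<or> j < i" by arith
      then show False
      proof
        assume ij: "i < j"
        have "h i = L (Suc j) ! i" unfolding h_def using pre[of i "Suc i" "Suc j"] ij by simp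
        moreover have "h j = L (Suc j) ! j" unfolding h_def by simp
        ultimately have "L (Suc j) ! i = L (Suc j) ! j" using e by simp
        then show False using props[of "Suc j"] len[of "Suc j"] ij nth_eq_iff_index_eq by fastforce
      next
        assume ij: "j < i"
        have "h j = L (Suc i) ! j" unfolding h_def using pre[of j "Suc j" "Suc i"] ij by simp
        moreover have "h i = L (Suc i) ! i" unfolding h_def by simp
        ultimately have "L (Suc i) ! j = L (Suc i) ! i" using e by simp
        then show False using props[of "Suc i"] len[of "Suc i"] ij nth_eq_iff_index_eq by fastforce
      qed
    qed
  qed
  define g where "g c r = h (prod_encode (c, r))" for c r
  have "\<forall>c r c' r'. g c r = g c' r' \<longrightarrow> c = c' \<and> r = r'"
  proof (intro allI impI)
    fix c r c' r' assume "g c r = g c' r'"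
    then have "prod_encode (c, r) = prod_encode (c', r')" unfolding g_def using hinj injD by metis
    then have "(c, r) = (c', r')" using inj_prod_encode[of UNIV] injD by metis
    then show "c = c' \<and> r = r'" by simp
  qed
  moreover have "\<forall>c r. g c r \<in> Cs c" unfolding g_def using hC by (metis fst_conv prod_encode_inverse)
  ultimately have "(\<forall>c r c' r'. g c r = g c' r' \<longrightarrow> c = c' \<and> r = r') \<and> (\<forall>c r. g c r \<in> Cs c)"
    by (rule conjI)
  then show ?thesis by (rule exI[where x=g])
qed

definition FF :: "(nat \<Rightarrow> nat \<Rightarrow> 'a) \<Rightarrow> nat set \<Rightarrow> 'a set" where
  "FF g Z = range (\<lambda>k. g (enumerate Z (2*k)) (enumerate Z (2*k+1)))"

locale gsetup =
  fixes X :: "'a set" and Cs :: "nat \<Rightarrow> 'a set" and g :: "nat \<Rightarrow> nat \<Rightarrow> 'a"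
  assumes ginj: "\<And>c r c' r'. g c r = g c' r' \<Longrightarrow> c = c' \<and> r = r'"
    and gC: "\<And>c r. g c r \<in> Cs c"
    and CX: "\<And>c. Cs c \<subseteq> X"
begin

lemma FF_Pinf: assumes Z: "infinite Z" shows "FF g Z \<in> Pinf X"
proof -
  have sub: "FF g Z \<subseteq> X" unfolding FF_def using gC CX by blast
  have "inj (\<lambda>k. g (enumerate Z (2*k)) (enumerate Z (2*k+1)))"
  proof (rule injI)
    fix k k' assume "g (enumerate Z (2*k)) (enumerate Z (2*k+1)) = g (enumerate Z (2*k')) (enumerate Z (2*k'+1))"
    then have "enumerate Z (2*k) = enumerate Z (2*k')" using ginj by blast
    then have "2*k = 2*k'" using inj_enumerate[OF Z] injD by metis
    then show "k = k'" by simp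
  qed
  then have "infinite (FF g Z)" unfolding FF_def using range_inj_infinite by blast
  then show ?thesis using sub unfolding Pinf_def by blast
qed

lemma FF_tail: assumes Z: "infinite Z" shows "finite (FF g Z - (\<Union>i\<in>{n..}. Cs i))"
proof -
  have "FF g Z - (\<Union>i\<in>{n..}. Cs i) \<subseteq> (\<lambda>k. g (enumerate Z (2*k)) (enumerate Z (2*k+1))) ` {..<n}"
  proof
    fix x assume x: "x \<in> FF g Z - (\<Union>i\<in>{n..}. Cs i)"
    then obtain k where xk: "x = g (enumerate Z (2*k)) (enumerate Z (2*k+1))" unfolding FF_def by blast
    have "\<not> n \<le> k"
    proof
      assume "n \<le> k"
      then have "n \<le> enumerate Z (2*k)" using le_enumerate[OF Z, of "2*k"] by simp
      then have "x \<in> (\<Union>i\<in>{n..}. Cs i)" using xk gC by blast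
      then show False using x by blast
    qed
    then show "x \<in> (\<lambda>k. g (enumerate Z (2*k)) (enumerate Z (2*k+1))) ` {..<n}" using xk by simp
  qed
  then show ?thesis by (rule finite_subset) simp
qed


lemma FF_cont:
  assumes U: "cantor_open X U"
  shows "Eopen {Z. infinite Z \<and> FF g Z \<in> U}"
  unfolding Eopen_def
proof
  fix Z assume "Z \<in> {Z. infinite Z \<and> FF g Z \<in> U}"
  then have Z: "infinite Z" and ZU: "FF g Z \<in> U" by auto
  obtain F0 G0 where fF: "finite F0" "finite G0" and cy: "FF g Z \<in> cyl X F0 G0" "cyl X F0 G0 \<subseteq> U"
    using U ZU unfolding cantor_open_def by blast
  define pt where "pt W k = g (enumerate W (2*k)) (enumerate W (2*k+1))" for W k
  have FFpt: "FF g W = range (pt W)" for W unfolding FF_def pt_def by simp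
  have F0Z: "\<forall>x\<in>F0. \<exists>k. x = pt Z k" using cy(1) unfolding cyl_def FFpt by blast
  then obtain f where f: "\<forall>x\<in>F0. x = pt Z (f x)" by (rule bchoice[elim_format]) blast
  define K where "K = Suc (Max (insert 0 (f ` F0)))"
  have fK: "f x < K" if "x \<in> F0" for x
  proof -
    have "f x \<le> Max (insert 0 (f ` F0))" using fF(1) that by (intro Max_ge) auto
    then show ?thesis unfolding K_def by simp
  qed
  define PG where "PG = (\<lambda>p. g (fst p) (snd p)) -` G0"
  have injp: "inj (\<lambda>p. g (fst p) (snd p))"
  proof (rule injI)
    fix p q assume "g (fst p) (snd p) = g (fst q) (snd q)"
    then have "fst p = fst q \<and> snd p = snd q" by (rule ginj)
    then show "p = q" by (simp add: prod_eq_iff)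
  qed
  have fPG: "finite PG" unfolding PG_def by (rule finite_vimageI[OF fF(2) injp])
  define M where "M = Max (insert 0 (fst ` PG \<union> snd ` PG))"
  have gM: "c \<le> M" if "g c r \<in> G0" for c r
  proof -
    have "(c, r) \<in> PG" unfolding PG_def using that by simp
    then have "c \<in> insert 0 (fst ` PG \<union> snd ` PG)" by force
    then show ?thesis unfolding M_def using fPG by (intro Max_ge) auto
  qed
  define m where "m = K + M + 1"
  define s where "s = enumerate Z ` {..<2*m}"
  have sZ: "s \<subseteq> Z" unfolding s_def using enumerate_in_set[OF Z] by blast
  have fs: "finite s" unfolding s_def by simp
  have ZE: "Z \<in> Ell s Z" using Z sZ unfolding Ell_def by blast
  have "Ell s Z \<subseteq> {Z. infinite Z \<and> FF g Z \<in> U}"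
  proof
    fix Y assume "Y \<in> Ell s Z"
    then have Y: "infinite Y" "s \<subseteq> Y" "Y \<subseteq> Z" unfolding Ell_def using sZ by auto
    have sub: "enumerate Z i \<in> Y" if "i < 2*m" for i using that Y(2) unfolding s_def by blast
    have agree: "enumerate Y i = enumerate Z i" if "i < 2*m" for i
      by (rule enum_agree[OF Y(1) Z Y(3) sub that])
    have ptk: "pt Y k = pt Z k" if "k < m" for k
      unfolding pt_def using agree that by simp
    have "FF g Y \<subseteq> X" using FF_Pinf[OF Y(1)] unfolding Pinf_def by blast
    moreover have "F0 \<subseteq> FF g Y"
    proof
      fix x assume x: "x \<in> F0"
      then have "x = pt Z (f x)" using f by blast
      moreover have "f x < m" using fK[OF x] unfolding m_def by simp
      ultimately have "x = pt Y (f x)" using ptk by simp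
      then show "x \<in> FF g Y" unfolding FFpt by blast
    qed
    moreover have "FF g Y \<inter> G0 = {}"
    proof (rule ccontr)
      assume "FF g Y \<inter> G0 \<noteq> {}"
      then obtain k where kG: "pt Y k \<in> G0" unfolding FFpt by blast
      show False
      proof (cases "k < m")
        case True
        then have "pt Z k \<in> G0" using kG ptk by simp
        moreover have "pt Z k \<in> FF g Z" unfolding FFpt by blast
        moreover have "FF g Z \<inter> G0 = {}" using cy(1) unfolding cyl_def by blast
        ultimately show False by blast
      next
        case False
        have "enumerate Y (2*k) \<le> M" using gM kG unfolding pt_def by blast
        moreover have "2*k \<le> enumerate Y (2*k)" by (rule le_enumerate[OF Y(1)])
        ultimately show False using False unfolding m_def by simp
      qed
    qed
    ultimately have "FF g Y \<in> cyl X F0 G0" unfolding cyl_def by blast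
    then show "Y \<in> {Z. infinite Z \<and> FF g Z \<in> U}" using cy(2) Y(1) by blast
  qed
  then show "\<exists>s A. finite s \<and> Z \<in> Ell s A \<and> Ell s A \<subseteq> {Z. infinite Z \<and> FF g Z \<in> U}"
    using fs ZE by blast
qed

lemma FF_K:
  assumes MD: "M_family X D" and CsD: "\<And>n. Cs n \<in> D" and H: "infinite H"
  shows "\<exists>Z. infinite Z \<and> Z \<subseteq> H \<and> FF g Z \<in> D"
proof -
  have hM: "D \<subseteq> Pinf X \<and> (\<forall>A\<in>D. \<forall>B. B \<subseteq> A \<and> infinite B \<longrightarrow> B \<in> D)
     \<and> (\<forall>As::nat \<Rightarrow> 'a set. (\<forall>n. As n \<in> D) \<longrightarrow> (\<exists>A\<in>D. \<forall>n. finite (A - (\<Union>i\<in>{n..}. As i))))"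
    using MD unfolding M_family_def .
  have DP: "D \<subseteq> Pinf X" using hM by (rule conjunct1)
  have her: "B \<in> D" if "A \<in> D" "B \<subseteq> A" "infinite B" for A B
    using hM[THEN conjunct2, THEN conjunct1] that by blast
  have mp: "\<exists>A\<in>D. \<forall>n. finite (A - (\<Union>i\<in>{n..}. As i))" if "\<forall>n. As n \<in> D" for As :: "nat \<Rightarrow> 'a set"
  proof -
    have mp0: "\<forall>As::nat \<Rightarrow> 'a set. (\<forall>n. As n \<in> D) \<longrightarrow> (\<exists>A\<in>D. \<forall>n. finite (A - (\<Union>i\<in>{n..}. As i)))"
      using hM by (rule conjunct2[THEN conjunct2])
    have "(\<forall>n. As n \<in> D) \<longrightarrow> (\<exists>A\<in>D. \<forall>n. finite (A - (\<Union>i\<in>{n..}. As i)))"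
      using mp0 by (rule spec)
    then show ?thesis using that by (rule mp)
  qed
  define eH where "eH = enumerate H"
  define As where "As k = (\<lambda>r. g (eH k) r) ` {r \<in> H. eH k < r}" for k
  have As_in: "As k \<in> D" for k
  proof -
    have "H - {..eH k} \<subseteq> {r \<in> H. eH k < r}" by auto
    moreover have "infinite (H - {..eH k})" using H by simp
    ultimately have inf1: "infinite {r \<in> H. eH k < r}" using finite_subset by blast
    have "inj_on (\<lambda>r. g (eH k) r) {r \<in> H. eH k < r}"
      by (rule inj_onI) (use ginj in blast)
    then have "infinite (As k)" unfolding As_def using inf1 finite_imageD by blast
    moreover have "As k \<subseteq> Cs (eH k)" unfolding As_def using gC by blast
    ultimately show ?thesis using her[OF CsD[of "eH k"]] by blast
  qed
  then have "\<forall>n. As n \<in> D" by blast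
  then obtain V where VD: "V \<in> D" and Vt: "\<forall>n. finite (V - (\<Union>i\<in>{n..}. As i))"
    using mp by blast
  have Vi: "infinite V" using DP VD unfolding Pinf_def by blast
  define P where "P q \<longleftrightarrow> fst q \<in> H \<and> snd q \<in> H \<and> fst q < snd q \<and> g (fst q) (snd q) \<in> V" for q
  have hi: "\<exists>q. P q \<and> m < fst q" for m
  proof -
    have "V \<inter> (\<Union>i\<in>{Suc m..}. As i) \<noteq> {}"
    proof
      assume "V \<inter> (\<Union>i\<in>{Suc m..}. As i) = {}"
      then have "V \<subseteq> V - (\<Union>i\<in>{Suc m..}. As i)" by blast
      then show False using Vt Vi finite_subset by blast
    qed
    then obtain v i where v: "v \<in> V" "Suc m \<le> i" "v \<in> As i" by blast
    then obtain r where r: "r \<in> H" "eH i < r" "v = g (eH i) r" unfolding As_def by blast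
    have "eH i \<in> H" unfolding eH_def using enumerate_in_set[OF H] .
    moreover have "i \<le> eH i" unfolding eH_def by (rule le_enumerate[OF H])
    ultimately have "P (eH i, r) \<and> m < fst (eH i, r)" unfolding P_def using r v by simp
    then show ?thesis by blast
  qed
  define nx where "nx m = (SOME q. P q \<and> m < fst q)" for m
  have nxP: "P (nx m) \<and> m < fst (nx m)" for m unfolding nx_def using hi[of m] by (rule someI_ex)
  define p where "p = rec_nat (nx 0) (\<lambda>j q. nx (snd q))"
  have p0: "p 0 = nx 0" unfolding p_def by simp
  have pS: "p (Suc j) = nx (snd (p j))" for j unfolding p_def by simp
  have pP: "P (p j)" for j by (cases j) (simp_all add: p0 pS nxP)
  have pS_lt: "snd (p j) < fst (p (Suc j))" for j unfolding pS using nxP by blast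
  define w where "w n = (if even n then fst (p (n div 2)) else snd (p (n div 2)))" for n
  have sm: "strict_mono w" unfolding strict_mono_Suc_iff
  proof
    fix n show "w n < w (Suc n)"
    proof (cases "even n")
      case True
      then have "Suc n div 2 = n div 2" by presburger
      then show ?thesis using True pP[of "n div 2"] unfolding w_def P_def by simp
    next
      case False
      then have "Suc n div 2 = Suc (n div 2)" by presburger
      then show ?thesis using False pS_lt[of "n div 2"] unfolding w_def by simp
    qed
  qed
  define Z where "Z = range w"
  have Zi: "infinite Z" unfolding Z_def using sm strict_mono_imp_inj_on range_inj_infinite by blast
  have ZH: "Z \<subseteq> H"
  proof
    fix z assume "z \<in> Z"
    then obtain n where "z = w n" unfolding Z_def by blast
    then show "z \<in> H" using pP[of "n div 2"] unfolding w_def P_def by (cases "even n") auto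
  qed
  have ew: "enumerate Z n = w n" for n unfolding Z_def by (rule enum_strict_mono[OF sm])
  have "FF g Z \<subseteq> V"
  proof
    fix x assume "x \<in> FF g Z"
    then obtain k where "x = g (enumerate Z (2*k)) (enumerate Z (2*k+1))" unfolding FF_def by blast
    then have "x = g (fst (p k)) (snd (p k))" unfolding ew w_def by simp
    then show "x \<in> V" using pP[of k] unfolding P_def by simp
  qed
  moreover have "infinite (FF g Z)" using FF_Pinf[OF Zi] unfolding Pinf_def by blast
  ultimately have "FF g Z \<in> D" using her[OF VD] by blast
  then show ?thesis using Zi ZH by blast
qed

end



lemma CR_ramsey:
  assumes "CR P" "infinite A"
  shows "\<exists>B\<subseteq>A. infinite B \<and> ({Y. infinite Y \<and> Y \<subseteq> B} \<subseteq> P \<or> {Y. infinite Y \<and> Y \<subseteq> B} \<inter> P = {})"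
proof -
  have "\<forall>s A. finite s \<longrightarrow> infinite A \<longrightarrow> (\<exists>B\<subseteq>A. infinite B \<and> (Ell s B \<subseteq> P \<or> Ell s B \<inter> P = {}))"
    using assms(1) unfolding CR_def .
  then have "\<exists>B\<subseteq>A. infinite B \<and> (Ell {} B \<subseteq> P \<or> Ell {} B \<inter> P = {})"
    using assms(2) by simp
  moreover have "Ell {} B = {Y. infinite Y \<and> Y \<subseteq> B}" for B unfolding Ell_def by auto
  ultimately show ?thesis by simp
qed

theorem proposition8:
  fixes X :: "'a set" and \<A> \<B> :: "'a set set"
  assumes "countable X"
    and "\<A> \<in> Cmeas X" and "\<B> \<in> Cmeas X"
    and "M_family X \<A>" and "M_family X \<B>"
  shows "M_family X (\<A> \<inter> \<B>)"
proof -
  have hA: "\<A> \<subseteq> Pinf X \<and> (\<forall>A\<in>\<A>. \<forall>B. B \<subseteq> A \<and> infinite B \<longrightarrow> B \<in> \<A>)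
     \<and> (\<forall>As::nat \<Rightarrow> 'a set. (\<forall>n. As n \<in> \<A>) \<longrightarrow> (\<exists>A\<in>\<A>. \<forall>n. finite (A - (\<Union>i\<in>{n..}. As i))))"
    using assms(4) unfolding M_family_def .
  have hB: "\<B> \<subseteq> Pinf X \<and> (\<forall>A\<in>\<B>. \<forall>B. B \<subseteq> A \<and> infinite B \<longrightarrow> B \<in> \<B>)
     \<and> (\<forall>As::nat \<Rightarrow> 'a set. (\<forall>n. As n \<in> \<B>) \<longrightarrow> (\<exists>A\<in>\<B>. \<forall>n. finite (A - (\<Union>i\<in>{n..}. As i))))"
    using assms(5) unfolding M_family_def .
  have P1: "\<A> \<inter> \<B> \<subseteq> Pinf X" using hA by blast
  have P2: "\<forall>A\<in>\<A> \<inter> \<B>. \<forall>B. B \<subseteq> A \<and> infinite B \<longrightarrow> B \<in> \<A> \<inter> \<B>"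
  proof (intro ballI allI impI)
    fix A B assume "A \<in> \<A> \<inter> \<B>" "B \<subseteq> A \<and> infinite B"
    then show "B \<in> \<A> \<inter> \<B>" using hA[THEN conjunct2, THEN conjunct1] hB[THEN conjunct2, THEN conjunct1]
      by blast
  qed
  have P3: "\<forall>As::nat \<Rightarrow> 'a set. (\<forall>n. As n \<in> \<A> \<inter> \<B>) \<longrightarrow> (\<exists>A\<in>\<A> \<inter> \<B>. \<forall>n. finite (A - (\<Union>i\<in>{n..}. As i)))"
  proof (intro allI impI)
    fix Cs :: "nat \<Rightarrow> 'a set" assume Cs: "\<forall>n. Cs n \<in> \<A> \<inter> \<B>"
    have CsA: "Cs n \<in> \<A>" and CsB: "Cs n \<in> \<B>" for n using Cs by blast+
    have CsP: "Cs n \<in> Pinf X" for n using CsA hA by blast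
    have inf: "infinite (Cs n)" for n using CsP[of n] unfolding Pinf_def by blast
    have CX: "Cs n \<subseteq> X" for n using CsP[of n] unfolding Pinf_def by blast
    obtain g :: "nat \<Rightarrow> nat \<Rightarrow> 'a" where ginj: "\<forall>c r c' r'. g c r = g c' r' \<longrightarrow> c = c' \<and> r = r'"
      and gC: "\<forall>c r. g c r \<in> Cs c"
      using inj_choice[of Cs, OF inf] by blast
    interpret gs: gsetup X Cs g
    proof
      show "\<And>c r c' r'. g c r = g c' r' \<Longrightarrow> c = c' \<and> r = r'" using ginj by blast
      show "\<And>c r. g c r \<in> Cs c" using gC by blast
      show "\<And>c. Cs c \<subseteq> X" by (rule CX)
    qed
    have CRA: "CR {Z. FF g Z \<in> \<A>}"
      by (rule CR_preimage[where Fm="FF g", OF gs.FF_Pinf gs.FF_cont assms(2)])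
    have CRB: "CR {Z. FF g Z \<in> \<B>}"
      by (rule CR_preimage[where Fm="FF g", OF gs.FF_Pinf gs.FF_cont assms(3)])
    obtain B1 :: "nat set" where B1i: "infinite B1"
      and B1c: "{Y. infinite Y \<and> Y \<subseteq> B1} \<subseteq> {Z. FF g Z \<in> \<A>} \<or> {Y. infinite Y \<and> Y \<subseteq> B1} \<inter> {Z. FF g Z \<in> \<A>} = {}"
      using CR_ramsey[OF CRA, of UNIV] by auto
    have B1A: "{Y. infinite Y \<and> Y \<subseteq> B1} \<subseteq> {Z. FF g Z \<in> \<A>}"
    proof -
      obtain Z where "infinite Z" "Z \<subseteq> B1" "FF g Z \<in> \<A>"
        using gs.FF_K[OF assms(4) CsA B1i] by blast
      then have "{Y. infinite Y \<and> Y \<subseteq> B1} \<inter> {Z. FF g Z \<in> \<A>} \<noteq> {}" by blast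
      then show ?thesis using B1c by blast
    qed
    obtain B2 :: "nat set" where B21: "B2 \<subseteq> B1" and B2i: "infinite B2"
      and B2c: "{Y. infinite Y \<and> Y \<subseteq> B2} \<subseteq> {Z. FF g Z \<in> \<B>} \<or> {Y. infinite Y \<and> Y \<subseteq> B2} \<inter> {Z. FF g Z \<in> \<B>} = {}"
      using CR_ramsey[OF CRB B1i] by blast
    have B2B: "{Y. infinite Y \<and> Y \<subseteq> B2} \<subseteq> {Z. FF g Z \<in> \<B>}"
    proof -
      obtain Z where "infinite Z" "Z \<subseteq> B2" "FF g Z \<in> \<B>"
        using gs.FF_K[OF assms(5) CsB B2i] by blast
      then have "{Y. infinite Y \<and> Y \<subseteq> B2} \<inter> {Z. FF g Z \<in> \<B>} \<noteq> {}" by blast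
      then show ?thesis using B2c by blast
    qed
    have "FF g B2 \<in> \<A>" using B1A B21 B2i by blast
    moreover have "FF g B2 \<in> \<B>" using B2B B2i by blast
    moreover have "\<forall>n. finite (FF g B2 - (\<Union>i\<in>{n..}. Cs i))" using gs.FF_tail[OF B2i] by blast
    ultimately show "\<exists>A\<in>\<A> \<inter> \<B>. \<forall>n. finite (A - (\<Union>i\<in>{n..}. Cs i))" by blast
  qed
  show ?thesis unfolding M_family_def by (intro conjI P1 P2 P3)
qed


end
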